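(* Let $R$ be a ring, $S_0(R)$ its largest left regular denominator set and $Q_l(R)=S_0(R)^{-1}R$, with group of units $Q_l(R)^*$. Then: (1) $S_0(Q_l(R))=Q_l(R)^*$ and $S_0(Q_l(R))\cap R=S_0(R)$. (2) $Q_l(R)^*$ is the group generated by $S_0(R)$ and $S_0(R)^{-1}:=\{s^{-1}\mid s\in S_0(R)\}$. (3) $Q_l(R)^*=\{s^{-1}t\mid s,t\in S_0(R)\}$. (4) $Q_l(Q_l(R))=Q_l(R)$.
   Context: Rings are associative with $1$. A multiplicatively closed subset $S\subseteq R$ ($1\in S$, $0\notin S$, closed under products) is a left Ore set if $Sr\cap Rs\neq\emptyset$ for all $r\in R,s\in S$; $\mathrm{ass}(S):=\{r\mid sr=0\text{ for some }s\in S\}$. A left Ore set is a left denominator set if $rs=0$ ($r\in R,s\in S$) implies $tr=0$ for some $t\in S$. $\mathrm{Den}_l(R,0)$ denotes the set of left denominator sets $S$ with $\mathrm{ass}(S)=0$; it has a largest element under inclusion, denoted $S_0(R)$ (the largest left regular denominator set), and $Q_l(R):=S_0(R)^{-1}R$ is the largest left quotient ring of $R$; $R$ is regarded as a subring of $Q_l(R)$. For any ring $A$, $S_0(A)$ and $Q_l(A)$ are defined in the same way, so $Q_l(R)\subseteq Q_l(Q_l(R))$ naturally. *)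

theory Defs
  imports "HOL-Algebra.Algebra"
begin

definition mult_closed_set :: "('a, 'b) ring_scheme \<Rightarrow> 'a set \<Rightarrow> bool" where
  "mult_closed_set R S \<longleftrightarrow> S \<subseteq> carrier R \<and> \<one>\<^bsub>R\<^esub> \<in> S \<and> \<zero>\<^bsub>R\<^esub> \<notin> S \<and>
     (\<forall>s\<in>S. \<forall>t\<in>S. s \<otimes>\<^bsub>R\<^esub> t \<in> S)"

definition left_Ore_set :: "('a, 'b) ring_scheme \<Rightarrow> 'a set \<Rightarrow> bool" where
  "left_Ore_set R S \<longleftrightarrow> mult_closed_set R S \<and>
     (\<forall>r\<in>carrier R. \<forall>s\<in>S. \<exists>s'\<in>S. \<exists>r'\<in>carrier R. s' \<otimes>\<^bsub>R\<^esub> r = r' \<otimes>\<^bsub>R\<^esub> s)"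

definition ass :: "('a, 'b) ring_scheme \<Rightarrow> 'a set \<Rightarrow> 'a set" where
  "ass R S = {r \<in> carrier R. \<exists>s\<in>S. s \<otimes>\<^bsub>R\<^esub> r = \<zero>\<^bsub>R\<^esub>}"

definition left_denominator_set :: "('a, 'b) ring_scheme \<Rightarrow> 'a set \<Rightarrow> bool" where
  "left_denominator_set R S \<longleftrightarrow> left_Ore_set R S \<and>
     (\<forall>r\<in>carrier R. \<forall>s\<in>S. r \<otimes>\<^bsub>R\<^esub> s = \<zero>\<^bsub>R\<^esub> \<longrightarrow> (\<exists>t\<in>S. t \<otimes>\<^bsub>R\<^esub> r = \<zero>\<^bsub>R\<^esub>))"

definition Den_l_0 :: "('a, 'b) ring_scheme \<Rightarrow> 'a set set" where
  "Den_l_0 R = {S. left_denominator_set R S \<and> ass R S = {\<zero>\<^bsub>R\<^esub>}}"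

definition S0 :: "('a, 'b) ring_scheme \<Rightarrow> 'a set" where
  "S0 R = (THE S. S \<in> Den_l_0 R \<and> (\<forall>T\<in>Den_l_0 R. T \<subseteq> S))"

text \<open>(Q, phi) is a left ring of fractions S^{-1}R of R at the left denominator set S
 (characterisation up to unique isomorphism): phi is a ring homomorphism, the
 images of elements of S are units, every element has the form phi(s)^{-1} phi(r),
 and the kernel of phi is ass(S).\<close>
definition left_ring_of_fractions ::
  "('a, 'b) ring_scheme \<Rightarrow> 'a set \<Rightarrow> ('c, 'd) ring_scheme \<Rightarrow> ('a \<Rightarrow> 'c) \<Rightarrow> bool" where
  "left_ring_of_fractions R S Q \<phi> \<longleftrightarrow> ring Q \<and> \<phi> \<in> ring_hom R Q \<and>
     (\<forall>s\<in>S. \<phi> s \<in> Units Q) \<and>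
     (\<forall>q\<in>carrier Q. \<exists>s\<in>S. \<exists>r\<in>carrier R. q = inv\<^bsub>Q\<^esub> (\<phi> s) \<otimes>\<^bsub>Q\<^esub> \<phi> r) \<and>
     (\<forall>r\<in>carrier R. \<phi> r = \<zero>\<^bsub>Q\<^esub> \<longleftrightarrow> r \<in> ass R S)"

end

theory Submission
  imports Defs
begin


definition regular :: "('a,'b) ring_scheme \<Rightarrow> 'a \<Rightarrow> bool" where
 "regular R x \<longleftrightarrow> x \<in> carrier R \<and> (\<forall>r\<in>carrier R. x \<otimes>\<^bsub>R\<^esub> r = \<zero>\<^bsub>R\<^esub> \<longrightarrow> r = \<zero>\<^bsub>R\<^esub>)
    \<and> (\<forall>r\<in>carrier R. r \<otimes>\<^bsub>R\<^esub> x = \<zero>\<^bsub>R\<^esub> \<longrightarrow> r = \<zero>\<^bsub>R\<^esub>)"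

lemma regD1: "regular R x \<Longrightarrow> r \<in> carrier R \<Longrightarrow> x \<otimes>\<^bsub>R\<^esub> r = \<zero>\<^bsub>R\<^esub> \<Longrightarrow> r = \<zero>\<^bsub>R\<^esub>"
  unfolding regular_def by blast
lemma regD2: "regular R x \<Longrightarrow> r \<in> carrier R \<Longrightarrow> r \<otimes>\<^bsub>R\<^esub> x = \<zero>\<^bsub>R\<^esub> \<Longrightarrow> r = \<zero>\<^bsub>R\<^esub>"
  unfolding regular_def by blast
lemma regC: "regular R x \<Longrightarrow> x \<in> carrier R"
  unfolding regular_def by blast
lemma regI: "x \<in> carrier R \<Longrightarrow> (\<And>r. r \<in> carrier R \<Longrightarrow> x \<otimes>\<^bsub>R\<^esub> r = \<zero>\<^bsub>R\<^esub> \<Longrightarrow> r = \<zero>\<^bsub>R\<^esub>)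
   \<Longrightarrow> (\<And>r. r \<in> carrier R \<Longrightarrow> r \<otimes>\<^bsub>R\<^esub> x = \<zero>\<^bsub>R\<^esub> \<Longrightarrow> r = \<zero>\<^bsub>R\<^esub>) \<Longrightarrow> regular R x"
  unfolding regular_def by blast

lemma den_iff:
  assumes "ring R"
  shows "S \<in> Den_l_0 R \<longleftrightarrow> left_Ore_set R S \<and> (\<forall>s\<in>S. regular R s)"
proof
  assume A: "S \<in> Den_l_0 R"
  hence ld: "left_denominator_set R S" and as: "ass R S = {\<zero>\<^bsub>R\<^esub>}" by (auto simp: Den_l_0_def)
  hence lo: "left_Ore_set R S" by (simp add: left_denominator_set_def)
  hence sub: "S \<subseteq> carrier R" by (simp add: left_Ore_set_def mult_closed_set_def)
  have "regular R s" if "s \<in> S" for s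
  proof -
    have a: "r = \<zero>\<^bsub>R\<^esub>" if "r \<in> carrier R" "s \<otimes>\<^bsub>R\<^esub> r = \<zero>\<^bsub>R\<^esub>" for r
      using that \<open>s\<in>S\<close> as unfolding ass_def by blast
    have b: "r = \<zero>\<^bsub>R\<^esub>" if "r \<in> carrier R" "r \<otimes>\<^bsub>R\<^esub> s = \<zero>\<^bsub>R\<^esub>" for r
    proof -
      note rr = that
      obtain t where "t \<in> S" "t \<otimes>\<^bsub>R\<^esub> r = \<zero>\<^bsub>R\<^esub>" using ld rr \<open>s\<in>S\<close> unfolding left_denominator_set_def by blast
      thus ?thesis using rr as unfolding ass_def by blast
    qed
    have "s \<in> carrier R" using sub \<open>s\<in>S\<close> by blast
    then show ?thesis using a b by (rule regI)
  qed
  thus "left_Ore_set R S \<and> (\<forall>s\<in>S. regular R s)" using lo by blast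
next
  assume B: "left_Ore_set R S \<and> (\<forall>s\<in>S. regular R s)"
  interpret ring R by fact
  from B have mc: "mult_closed_set R S" by (simp add: left_Ore_set_def)
  hence one: "\<one>\<^bsub>R\<^esub> \<in> S" by (simp add: mult_closed_set_def)
  have "\<forall>r\<in>carrier R. \<forall>s\<in>S. r \<otimes>\<^bsub>R\<^esub> s = \<zero>\<^bsub>R\<^esub> \<longrightarrow> (\<exists>t\<in>S. t \<otimes>\<^bsub>R\<^esub> r = \<zero>\<^bsub>R\<^esub>)"
  proof (intro ballI impI)
    fix r s assume r: "r \<in> carrier R" and s: "s \<in> S" and e: "r \<otimes>\<^bsub>R\<^esub> s = \<zero>\<^bsub>R\<^esub>"
    have "regular R s" using B s by blast
    hence "r = \<zero>\<^bsub>R\<^esub>" using r e by (rule regD2)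
    hence "\<one>\<^bsub>R\<^esub> \<otimes>\<^bsub>R\<^esub> r = \<zero>\<^bsub>R\<^esub>" using r by simp
    thus "\<exists>t\<in>S. t \<otimes>\<^bsub>R\<^esub> r = \<zero>\<^bsub>R\<^esub>" using one by blast
  qed
  hence "left_denominator_set R S"
    unfolding left_denominator_set_def using B by blast
  moreover have "ass R S = {\<zero>\<^bsub>R\<^esub>}"
  proof
    show "ass R S \<subseteq> {\<zero>\<^bsub>R\<^esub>}"
    proof
      fix r assume "r \<in> ass R S"
      then obtain s where rs: "r \<in> carrier R" "s \<in> S" "s \<otimes>\<^bsub>R\<^esub> r = \<zero>\<^bsub>R\<^esub>" unfolding ass_def by blast
      have "regular R s" using B rs(2) by blast
      then show "r \<in> {\<zero>\<^bsub>R\<^esub>}" using regD1 rs(1,3) by simp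
    qed
    have "\<one>\<^bsub>R\<^esub> \<otimes>\<^bsub>R\<^esub> \<zero>\<^bsub>R\<^esub> = \<zero>\<^bsub>R\<^esub>" by simp
    then show "{\<zero>\<^bsub>R\<^esub>} \<subseteq> ass R S" unfolding ass_def using one by blast
  qed
  ultimately show "S \<in> Den_l_0 R" by (simp add: Den_l_0_def)
qed

inductive_set gen :: "('a,'b) ring_scheme \<Rightarrow> 'a set \<Rightarrow> 'a set" for R A where
  gen_one: "\<one>\<^bsub>R\<^esub> \<in> gen R A"
| gen_step: "a \<in> A \<Longrightarrow> x \<in> gen R A \<Longrightarrow> a \<otimes>\<^bsub>R\<^esub> x \<in> gen R A"

context ring
begin

lemma gen_carrier: "x \<in> gen R A \<Longrightarrow> A \<subseteq> carrier R \<Longrightarrow> x \<in> carrier R"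
  by (induction x rule: gen.induct) auto

lemma gen_mult: "x \<in> gen R A \<Longrightarrow> A \<subseteq> carrier R \<Longrightarrow> y \<in> gen R A \<Longrightarrow> x \<otimes> y \<in> gen R A"
proof (induction x rule: gen.induct)
  case gen_one
  then show ?case using gen_carrier by simp
next
  case (gen_step a x)
  have c: "a \<in> carrier R" "x \<in> carrier R" "y \<in> carrier R"
    using gen_step gen_carrier[of _ A] by auto
  have "(a \<otimes> x) \<otimes> y = a \<otimes> (x \<otimes> y)" by (rule m_assoc[OF c])
  have "x \<otimes> y \<in> gen R A" using gen_step.IH gen_step.prems by blast
  then show ?case unfolding \<open>(a \<otimes> x) \<otimes> y = a \<otimes> (x \<otimes> y)\<close> using gen_step.hyps(1) by (rule gen.gen_step[rotated])
qed

lemma gen_incl: "A \<subseteq> carrier R \<Longrightarrow> a \<in> A \<Longrightarrow> a \<in> gen R A"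
  using gen_step[OF _ gen_one, of a A R] by auto

lemma regular_mult: "regular R x \<Longrightarrow> regular R y \<Longrightarrow> regular R (x \<otimes> y)"
proof -
  assume x: "regular R x" and y: "regular R y"
  have xc: "x \<in> carrier R" and yc: "y \<in> carrier R" using x y unfolding regular_def by blast+
  have p1: "r = \<zero>" if r: "r \<in> carrier R" "(x \<otimes> y) \<otimes> r = \<zero>" for r
  proof -
    have "x \<otimes> (y \<otimes> r) = \<zero>" using r xc yc by (simp add: m_assoc)
    hence "y \<otimes> r = \<zero>" by (rule regD1[OF x m_closed[OF yc r(1)]])
    thus ?thesis by (rule regD1[OF y r(1)])
  qed
  have p2: "r = \<zero>" if r: "r \<in> carrier R" "r \<otimes> (x \<otimes> y) = \<zero>" for r
  proof -
    have "(r \<otimes> x) \<otimes> y = \<zero>" using r xc yc by (simp add: m_assoc)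
    hence "r \<otimes> x = \<zero>" by (rule regD2[OF y m_closed[OF r(1) xc]])
    thus ?thesis by (rule regD2[OF x r(1)])
  qed
  show ?thesis by (rule regI[OF m_closed[OF xc yc] p1 p2])
qed

lemma regular_one: "regular R \<one>"
  by (rule regI) auto

lemma gen_regular: "x \<in> gen R A \<Longrightarrow> A \<subseteq> carrier R \<Longrightarrow> \<forall>a\<in>A. regular R a \<Longrightarrow> regular R x"
proof (induction x rule: gen.induct)
  case gen_one
  show ?case by (rule regular_one)
next
  case (gen_step a x)
  have "regular R a" using gen_step.hyps(1) gen_step.prems(2) by blast
  moreover have "regular R x" using gen_step.IH gen_step.prems by blast
  ultimately show ?case by (rule regular_mult)
qed

lemma gen_ore:
  assumes A: "A \<subseteq> carrier R"
    and H: "\<forall>a\<in>A. \<forall>r\<in>carrier R. \<exists>m\<in>gen R A. \<exists>r'\<in>carrier R. m \<otimes> r = r' \<otimes> a"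
    and x: "x \<in> gen R A"
  shows "\<forall>r\<in>carrier R. \<exists>m\<in>gen R A. \<exists>r'\<in>carrier R. m \<otimes> r = r' \<otimes> x"
  using x
proof (induction x rule: gen.induct)
  case gen_one
  show ?case
  proof
    fix r assume r: "r \<in> carrier R"
    have "\<one> \<otimes> r = r \<otimes> \<one>" using r by simp
    thus "\<exists>m\<in>gen R A. \<exists>r'\<in>carrier R. m \<otimes> r = r' \<otimes> \<one>" using r gen.gen_one by blast
  qed
next
  case (gen_step a y)
  show ?case
  proof
    fix r assume r: "r \<in> carrier R"
    obtain m1 r1 where m1: "m1 \<in> gen R A" "r1 \<in> carrier R" "m1 \<otimes> r = r1 \<otimes> y"
      using gen_step.IH r by blast
    obtain m2 r2 where m2: "m2 \<in> gen R A" "r2 \<in> carrier R" "m2 \<otimes> r1 = r2 \<otimes> a"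
      using H gen_step.hyps(1) m1(2) by blast
    have c: "m1 \<in> carrier R" "m2 \<in> carrier R" "y \<in> carrier R" "a \<in> carrier R"
      using m1 m2 gen_step A gen_carrier by auto
    have "(m2 \<otimes> m1) \<otimes> r = r2 \<otimes> (a \<otimes> y)"
      using c m1 m2 r by (metis m_assoc)
    moreover have "m2 \<otimes> m1 \<in> gen R A" using gen_mult A m1 m2 by blast
    ultimately show "\<exists>m\<in>gen R A. \<exists>r'\<in>carrier R. m \<otimes> r = r' \<otimes> (a \<otimes> y)" using m2(2) by blast
  qed
qed

lemma S0_exists:
  assumes one_ne: "\<one> \<noteq> \<zero>"
  shows "S0 R \<in> Den_l_0 R \<and> (\<forall>T\<in>Den_l_0 R. T \<subseteq> S0 R)"
proof -
  have rR: "ring R" by unfold_locales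
  have reg_nz: "regular R x \<Longrightarrow> x \<noteq> \<zero>" for x
    using one_ne unfolding regular_def by force
  have "mult_closed_set R {\<one>}"
    unfolding mult_closed_set_def using one_ne by simp
  moreover have "\<forall>r\<in>carrier R. \<forall>s\<in>{\<one>}. \<exists>s'\<in>{\<one>}. \<exists>r'\<in>carrier R. s' \<otimes> r = r' \<otimes> s"
    by simp
  ultimately have "left_Ore_set R {\<one>}" unfolding left_Ore_set_def by blast
  hence one_den: "{\<one>} \<in> Den_l_0 R"
    using den_iff[OF rR] regular_one by blast
  define U where "U = \<Union>(Den_l_0 R)"
  have DS: "left_Ore_set R S \<and> (\<forall>s\<in>S. regular R s)" if "S \<in> Den_l_0 R" for S
    using that den_iff[OF rR] by blast
  have sub: "S \<subseteq> carrier R" if "S \<in> Den_l_0 R" for S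
    using DS[OF that] by (simp add: left_Ore_set_def mult_closed_set_def)
  have gen_den: "gen R (S \<union> T) \<in> Den_l_0 R" if S: "S \<in> Den_l_0 R" and T: "T \<in> Den_l_0 R" for S T
  proof -
    have A: "S \<union> T \<subseteq> carrier R" using sub S T by blast
    have regA: "\<forall>a\<in>S \<union> T. regular R a" using DS S T by blast
    have reg: "\<forall>x\<in>gen R (S \<union> T). regular R x" using gen_regular[OF _ A regA] by blast
    have H: "\<forall>a\<in>S \<union> T. \<forall>r\<in>carrier R. \<exists>m\<in>gen R (S \<union> T). \<exists>r'\<in>carrier R. m \<otimes> r = r' \<otimes> a"
    proof (intro ballI)
      fix a r assume a: "a \<in> S \<union> T" and r: "r \<in> carrier R"
      show "\<exists>m\<in>gen R (S \<union> T). \<exists>r'\<in>carrier R. m \<otimes> r = r' \<otimes> a"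
      proof (cases "a \<in> S")
        case True
        then obtain s' r' where "s' \<in> S" "r' \<in> carrier R" "s' \<otimes> r = r' \<otimes> a"
          using DS[OF S] r unfolding left_Ore_set_def by blast
        then show ?thesis using gen_incl[OF A] by blast
      next
        case False
        then have "a \<in> T" using a by blast
        then obtain s' r' where "s' \<in> T" "r' \<in> carrier R" "s' \<otimes> r = r' \<otimes> a"
          using DS[OF T] r unfolding left_Ore_set_def by blast
        then show ?thesis using gen_incl[OF A] by blast
      qed
    qed
    have c1: "gen R (S \<union> T) \<subseteq> carrier R" using gen_carrier[OF _ A] by blast
    have c2: "\<one> \<in> gen R (S \<union> T)" by (rule gen_one)
    have c3: "\<zero> \<notin> gen R (S \<union> T)" using reg reg_nz by blast
    have c4: "\<forall>s\<in>gen R (S \<union> T). \<forall>t\<in>gen R (S \<union> T). s \<otimes> t \<in> gen R (S \<union> T)"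
      using gen_mult[OF _ A] by blast
    have c5: "\<forall>r\<in>carrier R. \<forall>s\<in>gen R (S \<union> T). \<exists>s'\<in>gen R (S \<union> T). \<exists>r'\<in>carrier R. s' \<otimes> r = r' \<otimes> s"
      using gen_ore[OF A H] by blast
    have "left_Ore_set R (gen R (S \<union> T))"
      unfolding left_Ore_set_def mult_closed_set_def using c1 c2 c3 c4 c5 by blast
    then show ?thesis using den_iff[OF rR] reg by blast
  qed
  have U_den: "U \<in> Den_l_0 R"
    unfolding den_iff[OF rR]
  proof
    show "left_Ore_set R U"
      unfolding left_Ore_set_def mult_closed_set_def
    proof (intro conjI ballI)
      show "U \<subseteq> carrier R" unfolding U_def using sub by blast
      show "\<one> \<in> U" unfolding U_def using one_den by blast
      show "\<zero> \<notin> U" unfolding U_def using DS reg_nz by blast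
    next
      fix s t assume "s \<in> U" "t \<in> U"
      then obtain S T where ST: "S \<in> Den_l_0 R" "T \<in> Den_l_0 R" "s \<in> S" "t \<in> T" unfolding U_def by blast
      have A: "S \<union> T \<subseteq> carrier R" using sub ST by blast
      have "s \<otimes> t \<in> gen R (S \<union> T)"
        using gen_mult[OF _ A] gen_incl[OF A] ST by blast
      then show "s \<otimes> t \<in> U" unfolding U_def using gen_den ST by blast
    next
      fix r s assume r: "r \<in> carrier R" and "s \<in> U"
      then obtain S where S: "S \<in> Den_l_0 R" "s \<in> S" unfolding U_def by blast
      then obtain s' r' where "s' \<in> S" "r' \<in> carrier R" "s' \<otimes> r = r' \<otimes> s"
        using DS[OF S(1)] r unfolding left_Ore_set_def by blast
      then show "\<exists>s'\<in>U. \<exists>r'\<in>carrier R. s' \<otimes> r = r' \<otimes> s" unfolding U_def using S by blast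
    qed
    show "\<forall>s\<in>U. regular R s" unfolding U_def using DS by blast
  qed
  have "S0 R = U"
    unfolding S0_def
  proof (rule the_equality)
    show "U \<in> Den_l_0 R \<and> (\<forall>T\<in>Den_l_0 R. T \<subseteq> U)" using U_den unfolding U_def by blast
    fix S assume "S \<in> Den_l_0 R \<and> (\<forall>T\<in>Den_l_0 R. T \<subseteq> S)"
    then show "S = U" using U_den unfolding U_def by blast
  qed
  then show ?thesis using U_den by (auto simp: U_def)
qed

lemma S0_eqI:
  assumes "XX \<in> Den_l_0 R" "\<forall>T\<in>Den_l_0 R. T \<subseteq> XX"
  shows "S0 R = XX"
  unfolding S0_def
proof (rule the_equality)
  show "XX \<in> Den_l_0 R \<and> (\<forall>T\<in>Den_l_0 R. T \<subseteq> XX)" using assms by blast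
  fix S assume "S \<in> Den_l_0 R \<and> (\<forall>T\<in>Den_l_0 R. T \<subseteq> S)"
  then show "S = XX" using assms by blast
qed

end


locale frac = Rr: ring R + ring Q for R :: "('a,'b) ring_scheme" and Q (structure) +
  fixes \<phi> :: "'a \<Rightarrow> 'c"
  assumes one_neR: "\<one>\<^bsub>R\<^esub> \<noteq> \<zero>\<^bsub>R\<^esub>"
    and lrf: "left_ring_of_fractions R (S0 R) Q \<phi>"
begin

lemma hom: "\<phi> \<in> ring_hom R Q" using lrf by (simp add: left_ring_of_fractions_def)

lemma phi_closed[simp]: "r \<in> carrier R \<Longrightarrow> \<phi> r \<in> carrier Q"
  using hom by (rule ring_hom_closed)
lemma phi_mult[simp]: "r \<in> carrier R \<Longrightarrow> s \<in> carrier R \<Longrightarrow> \<phi> (r \<otimes>\<^bsub>R\<^esub> s) = \<phi> r \<otimes> \<phi> s"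
  using hom by (rule ring_hom_mult)
lemma phi_one[simp]: "\<phi> \<one>\<^bsub>R\<^esub> = \<one>"
  using hom by (rule ring_hom_one)

interpretation h: ring_hom_ring R Q \<phi>
  using ring_hom_ringI2[OF Rr.ring_axioms ring_axioms hom] .

lemma phi_zero[simp]: "\<phi> \<zero>\<^bsub>R\<^esub> = \<zero>" by simp

lemma S0R: "S0 R \<in> Den_l_0 R" "\<And>T. T \<in> Den_l_0 R \<Longrightarrow> T \<subseteq> S0 R"
  using Rr.S0_exists[OF one_neR] by auto

lemma S0R_sub: "S0 R \<subseteq> carrier R"
  using S0R(1) unfolding Den_l_0_def left_denominator_set_def left_Ore_set_def mult_closed_set_def by blast

lemma assS: "ass R (S0 R) = {\<zero>\<^bsub>R\<^esub>}" using S0R(1) by (simp add: Den_l_0_def)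

lemma units_S: "s \<in> S0 R \<Longrightarrow> \<phi> s \<in> Units Q"
  using lrf by (simp add: left_ring_of_fractions_def)

lemma rep: "q \<in> carrier Q \<Longrightarrow> \<exists>s\<in>S0 R. \<exists>r\<in>carrier R. q = inv (\<phi> s) \<otimes> \<phi> r"
  using lrf unfolding left_ring_of_fractions_def by blast

lemma ker: "r \<in> carrier R \<Longrightarrow> \<phi> r = \<zero> \<longleftrightarrow> r = \<zero>\<^bsub>R\<^esub>"
  using lrf assS unfolding left_ring_of_fractions_def by blast

lemma inj: assumes "a \<in> carrier R" "b \<in> carrier R" "\<phi> a = \<phi> b" shows "a = b"
proof -
  have "\<phi> (a \<ominus>\<^bsub>R\<^esub> b) = \<phi> a \<ominus> \<phi> b"
    using assms by (simp add: Rr.minus_eq minus_eq)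
  also have "\<dots> = \<zero>" using assms by simp
  finally have "a \<ominus>\<^bsub>R\<^esub> b = \<zero>\<^bsub>R\<^esub>" using ker assms by simp
  thus ?thesis using assms by simp
qed

lemma one_neQ: "\<one> \<noteq> \<zero>"
  using ker[of "\<one>\<^bsub>R\<^esub>"] one_neR by auto

lemma unit_solve: "u \<in> Units Q \<Longrightarrow> x \<in> carrier Q \<Longrightarrow> y \<in> carrier Q \<Longrightarrow> (x = inv u \<otimes> y) \<longleftrightarrow> (u \<otimes> x = y)"
proof -
  assume u: "u \<in> Units Q" and x: "x \<in> carrier Q" and y: "y \<in> carrier Q"
  have uc: "u \<in> carrier Q" "inv u \<in> carrier Q" using u by auto
  show ?thesis
  proof
    assume "x = inv u \<otimes> y"
    then show "u \<otimes> x = y" using u uc y by (simp add: m_assoc[symmetric])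
  next
    assume h: "u \<otimes> x = y"
    have "inv u \<otimes> (u \<otimes> x) = x" using u uc x by (simp add: m_assoc[symmetric])
    then show "x = inv u \<otimes> y" using h by simp
  qed
qed

lemma unit_regular: "u \<in> Units Q \<Longrightarrow> regular Q u"
proof -
  assume u: "u \<in> Units Q"
  have uc: "u \<in> carrier Q" "inv u \<in> carrier Q" using u by auto
  have "r = \<zero>" if "r \<in> carrier Q" "u \<otimes> r = \<zero>" for r
  proof -
    have "r = inv u \<otimes> (u \<otimes> r)" using u uc that(1) by (simp add: m_assoc[symmetric])
    thus ?thesis using that uc by simp
  qed
  moreover have "r = \<zero>" if "r \<in> carrier Q" "r \<otimes> u = \<zero>" for r
  proof -
    have "r = (r \<otimes> u) \<otimes> inv u" using u uc that(1) by (simp add: m_assoc)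
    thus ?thesis using that uc by simp
  qed
  ultimately show ?thesis unfolding regular_def using uc by blast
qed

lemma zero_not_unit: "\<zero> \<notin> Units Q"
  using unit_regular[of \<zero>] one_neQ unfolding regular_def by auto

lemma units_den: "Units Q \<in> Den_l_0 Q"
proof -
  have zu: "\<zero> \<notin> Units Q" by (rule zero_not_unit)
  have "mult_closed_set Q (Units Q)"
    unfolding mult_closed_set_def using zu by auto
  moreover have "\<forall>r\<in>carrier Q. \<forall>s\<in>Units Q. \<exists>s'\<in>Units Q. \<exists>r'\<in>carrier Q. s' \<otimes> r = r' \<otimes> s"
  proof (intro ballI)
    fix r s assume r: "r \<in> carrier Q" and s: "s \<in> Units Q"
    have "\<one> \<otimes> r = (r \<otimes> inv s) \<otimes> s" using r s Units_closed[OF s] by (simp add: m_assoc)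
    moreover have "r \<otimes> inv s \<in> carrier Q" using r s by auto
    ultimately show "\<exists>s'\<in>Units Q. \<exists>r'\<in>carrier Q. s' \<otimes> r = r' \<otimes> s" by blast
  qed
  ultimately have "left_Ore_set Q (Units Q)" unfolding left_Ore_set_def by blast
  thus ?thesis using den_iff[OF ring_axioms] unit_regular by blast
qed

lemma T_units_den: "{r \<in> carrier R. \<phi> r \<in> Units Q} \<in> Den_l_0 R" (is "?T \<in> _")
proof -
  have sub: "?T \<subseteq> carrier R" by blast
  have one: "\<one>\<^bsub>R\<^esub> \<in> ?T" by simp
  have zero: "\<zero>\<^bsub>R\<^esub> \<notin> ?T" using zero_not_unit by simp
  have mc: "\<forall>a\<in>?T. \<forall>b\<in>?T. a \<otimes>\<^bsub>R\<^esub> b \<in> ?T" by auto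
  have ore: "\<forall>r\<in>carrier R. \<forall>t\<in>?T. \<exists>t'\<in>?T. \<exists>r'\<in>carrier R. t' \<otimes>\<^bsub>R\<^esub> r = r' \<otimes>\<^bsub>R\<^esub> t"
  proof (intro ballI)
    fix r t assume r: "r \<in> carrier R" and t: "t \<in> ?T"
    have tc: "t \<in> carrier R" and tu: "\<phi> t \<in> Units Q" using t by auto
    define x where "x = \<phi> r \<otimes> inv (\<phi> t)"
    have xc: "x \<in> carrier Q" using r tu unfolding x_def by simp
    obtain a r' where a: "a \<in> S0 R" "r' \<in> carrier R" "x = inv (\<phi> a) \<otimes> \<phi> r'" using rep[OF xc] by blast
    have ac: "a \<in> carrier R" using a(1) S0R_sub by blast
    have au: "\<phi> a \<in> Units Q" using units_S a(1) by blast
    have e1: "\<phi> a \<otimes> x = \<phi> r'" using unit_solve[OF au xc phi_closed[OF a(2)]] a(3) by simp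
    have e2: "x \<otimes> \<phi> t = \<phi> r" using r tu Units_closed[OF tu] unfolding x_def by (simp add: m_assoc)
    have "\<phi> (a \<otimes>\<^bsub>R\<^esub> r) = \<phi> a \<otimes> (x \<otimes> \<phi> t)" using ac r e2 by simp
    also have "\<dots> = (\<phi> a \<otimes> x) \<otimes> \<phi> t" using ac xc tc by (simp add: m_assoc)
    also have "\<dots> = \<phi> (r' \<otimes>\<^bsub>R\<^esub> t)" using e1 a(2) tc by simp
    finally have "a \<otimes>\<^bsub>R\<^esub> r = r' \<otimes>\<^bsub>R\<^esub> t" by (rule inj[rotated 2]) (use ac r a(2) tc in auto)
    moreover have "a \<in> ?T" using ac au by blast
    ultimately show "\<exists>t'\<in>?T. \<exists>r'\<in>carrier R. t' \<otimes>\<^bsub>R\<^esub> r = r' \<otimes>\<^bsub>R\<^esub> t" using a(2) by blast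
  qed
  have reg: "\<forall>t\<in>?T. regular R t"
  proof
    fix t assume t: "t \<in> ?T"
    have tc: "t \<in> carrier R" and tu: "\<phi> t \<in> Units Q" using t by auto
    have ru: "regular Q (\<phi> t)" by (rule unit_regular[OF tu])
    show "regular R t"
    proof (rule regI[OF tc])
      fix r assume r: "r \<in> carrier R" "t \<otimes>\<^bsub>R\<^esub> r = \<zero>\<^bsub>R\<^esub>"
      have "\<phi> t \<otimes> \<phi> r = \<zero>" using r tc phi_mult[of t r] by simp
      hence "\<phi> r = \<zero>" by (rule regD1[OF ru phi_closed[OF r(1)]])
      thus "r = \<zero>\<^bsub>R\<^esub>" using ker r(1) by simp
    next
      fix r assume r: "r \<in> carrier R" "r \<otimes>\<^bsub>R\<^esub> t = \<zero>\<^bsub>R\<^esub>"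
      have "\<phi> r \<otimes> \<phi> t = \<zero>" using r tc phi_mult[of r t] by simp
      hence "\<phi> r = \<zero>" by (rule regD2[OF ru phi_closed[OF r(1)]])
      thus "r = \<zero>\<^bsub>R\<^esub>" using ker r(1) by simp
    qed
  qed
  have "left_Ore_set R ?T"
    unfolding left_Ore_set_def mult_closed_set_def using sub one zero mc ore by blast
  thus ?thesis using den_iff[OF Rr.ring_axioms] reg by blast
qed

lemma phi_units: "{r \<in> carrier R. \<phi> r \<in> Units Q} = S0 R"
  using S0R(2)[OF T_units_den] units_S S0R_sub by blast

lemma den_sub_units:
  assumes D: "S' \<in> Den_l_0 Q"
  shows "S' \<subseteq> Units Q"
proof -
  have lo: "left_Ore_set Q S'" and rgs: "\<forall>\<sigma>\<in>S'. regular Q \<sigma>" using D den_iff[OF ring_axioms] by blast+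
  have rg: "regular Q \<sigma>" if "\<sigma> \<in> S'" for \<sigma> using rgs that by blast
  have mc: "mult_closed_set Q S'" using lo by (simp add: left_Ore_set_def)
  have S'c: "S' \<subseteq> carrier Q" and one: "\<one> \<in> S'" and zero: "\<zero> \<notin> S'"
    and mS: "\<forall>s\<in>S'. \<forall>t\<in>S'. s \<otimes> t \<in> S'" using mc unfolding mult_closed_set_def by blast+
  have oreQ: "\<exists>\<sigma>'\<in>S'. \<exists>q'\<in>carrier Q. \<sigma>' \<otimes> q = q' \<otimes> \<sigma>" if "q \<in> carrier Q" "\<sigma> \<in> S'" for q \<sigma>
    using lo that unfolding left_Ore_set_def by blast
  define T where "T = {b \<in> carrier R. (\<exists>\<sigma>\<in>S'. \<exists>q\<in>carrier Q. q \<otimes> \<phi> b = \<sigma>) \<and> (\<forall>x\<in>carrier Q. x \<otimes> \<phi> b = \<zero> \<longrightarrow> x = \<zero>)}"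
  have key: "b \<in> T" if b: "b \<in> carrier R" and v: "v \<in> Units Q" and \<sigma>: "\<sigma> \<in> S'" and e: "\<phi> b = v \<otimes> \<sigma>" for b v \<sigma>
  proof -
    have vc: "v \<in> carrier Q" "inv v \<in> carrier Q" using v by auto
    have \<sigma>c: "\<sigma> \<in> carrier Q" using \<sigma> S'c by blast
    have "\<sigma> = inv v \<otimes> \<phi> b" using unit_solve[OF v \<sigma>c phi_closed[OF b]] e by simp
    hence q: "inv v \<otimes> \<phi> b = \<sigma>" by simp
    have x0: "x = \<zero>" if x: "x \<in> carrier Q" "x \<otimes> \<phi> b = \<zero>" for x
    proof -
      have "(x \<otimes> v) \<otimes> \<sigma> = \<zero>" using x e vc \<sigma>c by (simp add: m_assoc)
      hence xv: "x \<otimes> v = \<zero>" by (rule regD2[OF rg[OF \<sigma>] m_closed[OF x(1) vc(1)]])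
      have "x = (x \<otimes> v) \<otimes> inv v" using x v vc by (simp add: m_assoc)
      thus ?thesis using xv vc by simp
    qed
    show ?thesis unfolding T_def using b \<sigma> vc(2) q x0 by blast
  qed
  have Tc: "T \<subseteq> carrier R" unfolding T_def by blast
  have T1: "\<one>\<^bsub>R\<^esub> \<in> T" by (rule key[OF Rr.one_closed Units_one_closed one]) simp
  have T0: "\<zero>\<^bsub>R\<^esub> \<notin> T"
  proof
    assume "\<zero>\<^bsub>R\<^esub> \<in> T"
    then obtain \<sigma> q where "\<sigma> \<in> S'" "q \<in> carrier Q" "q \<otimes> \<phi> \<zero>\<^bsub>R\<^esub> = \<sigma>" unfolding T_def by blast
    thus False using zero by simp
  qed
  have Tm: "\<forall>b1\<in>T. \<forall>b2\<in>T. b1 \<otimes>\<^bsub>R\<^esub> b2 \<in> T"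
  proof (intro ballI)
    fix b1 b2 assume b1: "b1 \<in> T" and b2: "b2 \<in> T"
    obtain \<sigma>1 q1 where s1: "\<sigma>1 \<in> S'" "q1 \<in> carrier Q" "q1 \<otimes> \<phi> b1 = \<sigma>1" using b1 unfolding T_def by blast
    obtain \<sigma>2 q2 where s2: "\<sigma>2 \<in> S'" "q2 \<in> carrier Q" "q2 \<otimes> \<phi> b2 = \<sigma>2" using b2 unfolding T_def by blast
    have b1c: "b1 \<in> carrier R" and b2c: "b2 \<in> carrier R" using b1 b2 unfolding T_def by blast+
    have r1: "\<forall>x\<in>carrier Q. x \<otimes> \<phi> b1 = \<zero> \<longrightarrow> x = \<zero>" using b1 unfolding T_def by blast
    have r2: "\<forall>x\<in>carrier Q. x \<otimes> \<phi> b2 = \<zero> \<longrightarrow> x = \<zero>" using b2 unfolding T_def by blast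
    obtain \<sigma>' q' where o: "\<sigma>' \<in> S'" "q' \<in> carrier Q" "\<sigma>' \<otimes> q2 = q' \<otimes> \<sigma>1" using oreQ[OF s2(2) s1(1)] by blast
    have c: "\<sigma>1 \<in> carrier Q" "\<sigma>' \<in> carrier Q" using s1(1) o(1) S'c by blast+
    have "(q' \<otimes> q1) \<otimes> \<phi> (b1 \<otimes>\<^bsub>R\<^esub> b2) = q' \<otimes> ((q1 \<otimes> \<phi> b1) \<otimes> \<phi> b2)"
      using b1c b2c s1(2) o(2) by (simp add: m_assoc)
    also have "\<dots> = (q' \<otimes> \<sigma>1) \<otimes> \<phi> b2" using s1(3) c o(2) b2c by (simp add: m_assoc)
    also have "\<dots> = (\<sigma>' \<otimes> q2) \<otimes> \<phi> b2" using o(3) by simp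
    also have "\<dots> = \<sigma>' \<otimes> \<sigma>2" using s2 c b2c by (simp add: m_assoc)
    finally have e: "(q' \<otimes> q1) \<otimes> \<phi> (b1 \<otimes>\<^bsub>R\<^esub> b2) = \<sigma>' \<otimes> \<sigma>2" .
    have "\<sigma>' \<otimes> \<sigma>2 \<in> S'" using mS o(1) s2(1) by blast
    moreover have "q' \<otimes> q1 \<in> carrier Q" using o(2) s1(2) by simp
    moreover have "x = \<zero>" if x: "x \<in> carrier Q" "x \<otimes> \<phi> (b1 \<otimes>\<^bsub>R\<^esub> b2) = \<zero>" for x
    proof -
      have "(x \<otimes> \<phi> b1) \<otimes> \<phi> b2 = \<zero>" using x b1c b2c by (simp add: m_assoc)
      hence "x \<otimes> \<phi> b1 = \<zero>" using r2 x(1) b1c by simp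
      thus ?thesis using r1 x(1) by simp
    qed
    ultimately show "b1 \<otimes>\<^bsub>R\<^esub> b2 \<in> T" unfolding T_def using b1c b2c e by blast
  qed
  have Tore: "\<forall>r\<in>carrier R. \<forall>b\<in>T. \<exists>t'\<in>T. \<exists>r'\<in>carrier R. t' \<otimes>\<^bsub>R\<^esub> r = r' \<otimes>\<^bsub>R\<^esub> b"
  proof (intro ballI)
    fix r b assume r: "r \<in> carrier R" and b: "b \<in> T"
    have bc: "b \<in> carrier R" using b unfolding T_def by blast
    obtain \<sigma> q where s: "\<sigma> \<in> S'" "q \<in> carrier Q" "q \<otimes> \<phi> b = \<sigma>" using b unfolding T_def by blast
    obtain \<sigma>' q' where o: "\<sigma>' \<in> S'" "q' \<in> carrier Q" "\<sigma>' \<otimes> \<phi> r = q' \<otimes> \<sigma>" using oreQ[OF phi_closed[OF r] s(1)] by blast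
    have c: "\<sigma> \<in> carrier Q" "\<sigma>' \<in> carrier Q" using s(1) o(1) S'c by blast+
    obtain a c' where a: "a \<in> S0 R" "c' \<in> carrier R" "\<sigma>' = inv (\<phi> a) \<otimes> \<phi> c'" using rep[OF c(2)] by blast
    have ac: "a \<in> carrier R" using a(1) S0R_sub by blast
    have au: "\<phi> a \<in> Units Q" using units_S a(1) by blast
    have e1: "\<phi> a \<otimes> \<sigma>' = \<phi> c'" using unit_solve[OF au c(2) phi_closed[OF a(2)]] a(3) by simp
    define y where "y = (\<phi> a \<otimes> q') \<otimes> q"
    have yc: "y \<in> carrier Q" unfolding y_def using ac o(2) s(2) by simp
    obtain a2 d where a2: "a2 \<in> S0 R" "d \<in> carrier R" "y = inv (\<phi> a2) \<otimes> \<phi> d" using rep[OF yc] by blast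
    have a2c: "a2 \<in> carrier R" using a2(1) S0R_sub by blast
    have a2u: "\<phi> a2 \<in> Units Q" using units_S a2(1) by blast
    have e2: "\<phi> a2 \<otimes> y = \<phi> d" using unit_solve[OF a2u yc phi_closed[OF a2(2)]] a2(3) by simp
    have "\<phi> ((a2 \<otimes>\<^bsub>R\<^esub> c') \<otimes>\<^bsub>R\<^esub> r) = (\<phi> a2 \<otimes> \<phi> c') \<otimes> \<phi> r" using a2c a(2) r by simp
    also have "\<dots> = (\<phi> a2 \<otimes> (\<phi> a \<otimes> \<sigma>')) \<otimes> \<phi> r" using e1 by simp
    also have "\<dots> = \<phi> a2 \<otimes> (\<phi> a \<otimes> (\<sigma>' \<otimes> \<phi> r))" using a2c ac c r by (simp add: m_assoc)
    also have "\<dots> = \<phi> a2 \<otimes> (\<phi> a \<otimes> (q' \<otimes> (q \<otimes> \<phi> b)))" using o(3) s(3) by simp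
    also have "\<dots> = (\<phi> a2 \<otimes> y) \<otimes> \<phi> b" unfolding y_def using a2c ac o(2) s(2) bc by (simp add: m_assoc)
    also have "\<dots> = \<phi> (d \<otimes>\<^bsub>R\<^esub> b)" using e2 a2(2) bc by simp
    finally have "(a2 \<otimes>\<^bsub>R\<^esub> c') \<otimes>\<^bsub>R\<^esub> r = d \<otimes>\<^bsub>R\<^esub> b" by (rule inj[rotated 2]) (use a2c a(2) r a2(2) bc in auto)
    moreover have "a2 \<otimes>\<^bsub>R\<^esub> c' \<in> T"
    proof (rule key)
      show "a2 \<otimes>\<^bsub>R\<^esub> c' \<in> carrier R" using a2c a(2) by simp
      show "\<phi> a2 \<otimes> \<phi> a \<in> Units Q" using a2u au by simp
      show "\<sigma>' \<in> S'" by (rule o(1))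
      have "\<phi> (a2 \<otimes>\<^bsub>R\<^esub> c') = \<phi> a2 \<otimes> (\<phi> a \<otimes> \<sigma>')" using a2c a(2) e1 by simp
      also have "\<dots> = (\<phi> a2 \<otimes> \<phi> a) \<otimes> \<sigma>'" using a2c ac c by (simp add: m_assoc)
      finally show "\<phi> (a2 \<otimes>\<^bsub>R\<^esub> c') = (\<phi> a2 \<otimes> \<phi> a) \<otimes> \<sigma>'" .
    qed
    ultimately show "\<exists>t'\<in>T. \<exists>r'\<in>carrier R. t' \<otimes>\<^bsub>R\<^esub> r = r' \<otimes>\<^bsub>R\<^esub> b" using a2(2) by blast
  qed
  have Treg: "\<forall>b\<in>T. regular R b"
  proof
    fix b assume b: "b \<in> T"
    have bc: "b \<in> carrier R" using b unfolding T_def by blast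
    obtain \<sigma> q where s: "\<sigma> \<in> S'" "q \<in> carrier Q" "q \<otimes> \<phi> b = \<sigma>" using b unfolding T_def by blast
    have rb: "\<forall>x\<in>carrier Q. x \<otimes> \<phi> b = \<zero> \<longrightarrow> x = \<zero>" using b unfolding T_def by blast
    show "regular R b"
    proof (rule regI[OF bc])
      fix r assume r: "r \<in> carrier R" "b \<otimes>\<^bsub>R\<^esub> r = \<zero>\<^bsub>R\<^esub>"
      have "\<phi> b \<otimes> \<phi> r = \<zero>" using r bc phi_mult[of b r] by simp
      hence "q \<otimes> (\<phi> b \<otimes> \<phi> r) = \<zero>" using s(2) by simp
      hence "\<sigma> \<otimes> \<phi> r = \<zero>" using s(2,3) bc r(1) by (simp add: m_assoc[symmetric])
      hence "\<phi> r = \<zero>" by (rule regD1[OF rg[OF s(1)] phi_closed[OF r(1)]])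
      thus "r = \<zero>\<^bsub>R\<^esub>" using ker r(1) by simp
    next
      fix r assume r: "r \<in> carrier R" "r \<otimes>\<^bsub>R\<^esub> b = \<zero>\<^bsub>R\<^esub>"
      have "\<phi> r \<otimes> \<phi> b = \<zero>" using r bc phi_mult[of r b] by simp
      hence "\<phi> r = \<zero>" using rb r(1) by simp
      thus "r = \<zero>\<^bsub>R\<^esub>" using ker r(1) by simp
    qed
  qed
  have "left_Ore_set R T"
    unfolding left_Ore_set_def mult_closed_set_def using Tc T1 T0 Tm Tore by blast
  hence "T \<in> Den_l_0 R" using den_iff[OF Rr.ring_axioms] Treg by blast
  hence TS: "T \<subseteq> S0 R" by (rule S0R(2))
  show ?thesis
  proof
    fix s assume s: "s \<in> S'"
    have sc: "s \<in> carrier Q" using s S'c by blast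
    obtain a b where ab: "a \<in> S0 R" "b \<in> carrier R" "s = inv (\<phi> a) \<otimes> \<phi> b" using rep[OF sc] by blast
    have au: "\<phi> a \<in> Units Q" using units_S ab(1) by blast
    have "\<phi> a \<otimes> s = \<phi> b" using unit_solve[OF au sc phi_closed[OF ab(2)]] ab(3) by simp
    hence "b \<in> T" using key[OF ab(2) au s] by simp
    hence "\<phi> b \<in> Units Q" using TS units_S by blast
    thus "s \<in> Units Q" using ab(3) au by simp
  qed
qed

lemma S0Q: "S0 Q = Units Q"
  using S0_eqI[OF units_den] den_sub_units by blast

lemma units_frac: "Units Q = {inv (\<phi> s) \<otimes> \<phi> t | s t. s \<in> S0 R \<and> t \<in> S0 R}"
proof
  show "Units Q \<subseteq> {inv (\<phi> s) \<otimes> \<phi> t | s t. s \<in> S0 R \<and> t \<in> S0 R}"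
  proof
    fix u assume u: "u \<in> Units Q"
    have uc: "u \<in> carrier Q" using u by auto
    obtain a b where ab: "a \<in> S0 R" "b \<in> carrier R" "u = inv (\<phi> a) \<otimes> \<phi> b" using rep[OF uc] by blast
    have au: "\<phi> a \<in> Units Q" using units_S ab(1) by blast
    have "\<phi> a \<otimes> u = \<phi> b" using unit_solve[OF au uc phi_closed[OF ab(2)]] ab(3) by simp
    hence "\<phi> b \<in> Units Q" using au u by (metis Units_m_closed)
    hence "b \<in> S0 R" using phi_units ab(2) by blast
    thus "u \<in> {inv (\<phi> s) \<otimes> \<phi> t | s t. s \<in> S0 R \<and> t \<in> S0 R}" using ab(1,3) by blast
  qed
  show "{inv (\<phi> s) \<otimes> \<phi> t | s t. s \<in> S0 R \<and> t \<in> S0 R} \<subseteq> Units Q"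
    using units_S by auto
qed

lemma units_gen: "Units Q = generate (units_of Q) (\<phi> ` S0 R \<union> (\<lambda>s. inv (\<phi> s)) ` S0 R)"
proof
  show "Units Q \<subseteq> generate (units_of Q) (\<phi> ` S0 R \<union> (\<lambda>s. inv (\<phi> s)) ` S0 R)"
  proof
    fix u assume "u \<in> Units Q"
    then obtain s t where st: "s \<in> S0 R" "t \<in> S0 R" "u = inv (\<phi> s) \<otimes> \<phi> t" using units_frac by blast
    have "inv (\<phi> s) \<in> generate (units_of Q) (\<phi> ` S0 R \<union> (\<lambda>s. inv (\<phi> s)) ` S0 R)"
      using st(1) by (intro generate.incl) blast
    moreover have "\<phi> t \<in> generate (units_of Q) (\<phi> ` S0 R \<union> (\<lambda>s. inv (\<phi> s)) ` S0 R)"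
      using st(2) by (intro generate.incl) blast
    ultimately have "inv (\<phi> s) \<otimes>\<^bsub>units_of Q\<^esub> \<phi> t \<in> generate (units_of Q) (\<phi> ` S0 R \<union> (\<lambda>s. inv (\<phi> s)) ` S0 R)"
      by (rule generate.eng)
    thus "u \<in> generate (units_of Q) (\<phi> ` S0 R \<union> (\<lambda>s. inv (\<phi> s)) ` S0 R)"
      using st(3) by (simp add: units_of_mult)
  qed
  have "\<phi> ` S0 R \<union> (\<lambda>s. inv (\<phi> s)) ` S0 R \<subseteq> carrier (units_of Q)"
    using units_S by (auto simp: units_of_carrier)
  then show "generate (units_of Q) (\<phi> ` S0 R \<union> (\<lambda>s. inv (\<phi> s)) ` S0 R) \<subseteq> Units Q"
    using group.generate_incl[OF units_group] by (metis units_of_carrier)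
qed

lemma ass_units: "ass Q (Units Q) = {\<zero>}"
  using units_den by (simp add: Den_l_0_def)

lemma id_frac: "left_ring_of_fractions Q (Units Q) Q id"
  unfolding left_ring_of_fractions_def
proof (intro conjI ballI)
  show "ring Q" by (rule ring_axioms)
  show "id \<in> ring_hom Q Q" by simp
  fix s assume "s \<in> Units Q" thus "id s \<in> Units Q" by simp
next
  fix q assume q: "q \<in> carrier Q"
  have "q = inv (id \<one>) \<otimes> id q" using q by simp
  thus "\<exists>s\<in>Units Q. \<exists>r\<in>carrier Q. q = inv (id s) \<otimes> id r" using q Units_one_closed by blast
next
  fix r assume "r \<in> carrier Q"
  thus "(id r = \<zero>) = (r \<in> ass Q (Units Q))" using ass_units by simp
qed

lemma psi_bij:
  fixes Q' :: "('e,'f) ring_scheme" and \<psi> :: "'c \<Rightarrow> 'e"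
  assumes L: "left_ring_of_fractions Q (Units Q) Q' \<psi>"
  shows "bij_betw \<psi> (carrier Q) (carrier Q')"
proof -
  have rQ': "ring Q'" and hom': "\<psi> \<in> ring_hom Q Q'"
    and U': "\<forall>s\<in>Units Q. \<psi> s \<in> Units Q'"
    and rep': "\<forall>q\<in>carrier Q'. \<exists>s\<in>Units Q. \<exists>r\<in>carrier Q. q = inv\<^bsub>Q'\<^esub> (\<psi> s) \<otimes>\<^bsub>Q'\<^esub> \<psi> r"
    and ker': "\<forall>r\<in>carrier Q. \<psi> r = \<zero>\<^bsub>Q'\<^esub> \<longleftrightarrow> r \<in> ass Q (Units Q)"
    using L unfolding left_ring_of_fractions_def by blast+
  interpret Q': ring Q' by (rule rQ')
  interpret h': ring_hom_ring Q Q' \<psi> using ring_hom_ringI2[OF ring_axioms rQ' hom'] .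
  have inj: "inj_on \<psi> (carrier Q)"
  proof (rule inj_onI)
    fix a b assume a: "a \<in> carrier Q" and b: "b \<in> carrier Q" and e: "\<psi> a = \<psi> b"
    have "\<psi> (a \<ominus> b) = \<psi> a \<ominus>\<^bsub>Q'\<^esub> \<psi> b" using a b by (simp add: minus_eq Q'.minus_eq)
    also have "\<dots> = \<zero>\<^bsub>Q'\<^esub>" using e b by simp
    finally have "a \<ominus> b \<in> ass Q (Units Q)" using ker' a b by simp
    hence "a \<ominus> b = \<zero>" using ass_units by simp
    thus "a = b" using a b by simp
  qed
  have "\<psi> ` carrier Q = carrier Q'"
  proof
    show "\<psi> ` carrier Q \<subseteq> carrier Q'" using ring_hom_closed[OF hom'] by (rule image_subsetI)
    show "carrier Q' \<subseteq> \<psi> ` carrier Q"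
    proof
      fix q assume q: "q \<in> carrier Q'"
      obtain s r where sr: "s \<in> Units Q" "r \<in> carrier Q" "q = inv\<^bsub>Q'\<^esub> (\<psi> s) \<otimes>\<^bsub>Q'\<^esub> \<psi> r" using rep' q by blast
      have sc: "s \<in> carrier Q" "inv s \<in> carrier Q" using sr(1) by auto
      have "\<psi> s \<otimes>\<^bsub>Q'\<^esub> \<psi> (inv s) = \<one>\<^bsub>Q'\<^esub>" using sc sr(1) by (simp add: ring_hom_mult[OF hom', symmetric])
      moreover have "\<psi> (inv s) \<otimes>\<^bsub>Q'\<^esub> \<psi> s = \<one>\<^bsub>Q'\<^esub>" using sc sr(1) by (simp add: ring_hom_mult[OF hom', symmetric])
      ultimately have "\<psi> (inv s) = inv\<^bsub>Q'\<^esub> (\<psi> s)" using sc by (intro Q'.inv_unique') simp_all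
      hence "q = \<psi> (inv s \<otimes> r)" using sr sc by simp
      thus "q \<in> \<psi> ` carrier Q" using sc sr(2) by blast
    qed
  qed
  thus ?thesis using inj by (simp add: bij_betw_def)
qed

end

theorem theorem2p8:
  fixes R :: "('a, 'b) ring_scheme" and Q :: "('c, 'd) ring_scheme" and \<phi> :: "'a \<Rightarrow> 'c"
    and Q' :: "('e, 'f) ring_scheme" and \<psi> :: "'c \<Rightarrow> 'e"
  assumes "ring R"
    and "\<one>\<^bsub>R\<^esub> \<noteq> \<zero>\<^bsub>R\<^esub>"
    and "left_ring_of_fractions R (S0 R) Q \<phi>"
  shows "(S0 Q = Units Q \<and> {r \<in> carrier R. \<phi> r \<in> S0 Q} = S0 R)
    \<and> Units Q = generate (units_of Q) (\<phi> ` S0 R \<union> (\<lambda>s. inv\<^bsub>Q\<^esub> (\<phi> s)) ` S0 R)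
    \<and> Units Q = {inv\<^bsub>Q\<^esub> (\<phi> s) \<otimes>\<^bsub>Q\<^esub> \<phi> t | s t. s \<in> S0 R \<and> t \<in> S0 R}
    \<and> left_ring_of_fractions Q (S0 Q) Q id
    \<and> (left_ring_of_fractions Q (S0 Q) Q' \<psi> \<longrightarrow> bij_betw \<psi> (carrier Q) (carrier Q'))"
proof -
  have rQ: "ring Q" using assms(3) unfolding left_ring_of_fractions_def by blast
  interpret F: frac R Q \<phi>
    by (rule frac.intro[OF assms(1) rQ frac_axioms.intro[OF assms(2) assms(3)]])
  have a: "S0 Q = Units Q" by (rule F.S0Q)
  have b: "{r \<in> carrier R. \<phi> r \<in> S0 Q} = S0 R" unfolding a by (rule F.phi_units)
  have c: "Units Q = generate (units_of Q) (\<phi> ` S0 R \<union> (\<lambda>s. inv\<^bsub>Q\<^esub> (\<phi> s)) ` S0 R)" by (rule F.units_gen)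
  have d: "Units Q = {inv\<^bsub>Q\<^esub> (\<phi> s) \<otimes>\<^bsub>Q\<^esub> \<phi> t | s t. s \<in> S0 R \<and> t \<in> S0 R}" by (rule F.units_frac)
  have e: "left_ring_of_fractions Q (S0 Q) Q id" unfolding a by (rule F.id_frac)
  have f: "left_ring_of_fractions Q (S0 Q) Q' \<psi> \<longrightarrow> bij_betw \<psi> (carrier Q) (carrier Q')"
    unfolding a using F.psi_bij by blast
  show ?thesis using a b c d e f by blast
qed

end
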